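(* Let $Q\subset\mathbb{R}^n$ be a compact controlled $\tau$-recurrent set for the control system $\dot x=f(x,u)$, for some finite $\tau\ge 0$, and suppose the $\tau$-completeness assumption holds and $L_\tau<\infty$. Then for every $x\in Q$ and every $u\in\mathcal{U}_r$ such that the trajectory $\xi(x,u,\cdot)$ is $(\tau,Q)$-recurrent, $$\sup_{t\in\mathbb{R}_{\ge 0}} d(\xi(x,u,t),Q)\;\le\; F_Q\,\tau\, e^{L_\tau\tau},$$ where $d(y,Q)=\min_{q\in Q}\|y-q\|$ and $F_Q=\sup_{x\in Q,\,u\in U}\|f(x,u)\|<\infty$.
   Context: Consider the control system $\dot x(t)=f(x(t),u(t))$ with $x(t)\in\mathbb{R}^n$, $f$ locally Lipschitz, and controls $u\in\mathcal{U}$, where $\mathcal{U}$ is a set of piecewise continuous functions $\mathbb{R}_{\ge0}\to U$ with $U\subset\mathbb{R}^m$ compact. $\xi(x,u,t)$ denotes the solution at time $t$ from initial state $x$ under control $u$. $\|\cdot\|$ is a fixed norm on $\mathbb{R}^n$. For $\varepsilon\ge0$ and compact $Q$, $N_\varepsilon(Q)=\{y:\exists x\in Q,\ \|x-y\|\le\varepsilon\}$. A set $Q$ is controlled $\tau$-recurrent if for every $x\in Q$ there is $u\in\mathcal{U}$ such that for every $t\ge0$ there exists $t'\in[t,t+\tau]$ with $\xi(x,u,t')\in Q$. For $\tau\ge0,\varepsilon\ge0,T\ge\tau$, compact $Q$, $x\in Q$, $u\in\mathcal U$, the trajectory $\xi(x,u,\cdot)$ is $(T,\varepsilon,\tau,Q)$-recurrent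 if for every $t\in[0,T-\tau]$ there exists $t'\in[t,t+\tau]$ with $\xi(x,u,t')\in N_\varepsilon(Q)$; "$(\tau,Q)$-recurrent" means $\varepsilon=0$ and $T=\infty$ (the condition holds for all $t\ge 0$). $\tau$-completeness assumption: for every $x\in Q$ and $u\in\mathcal U$, $\xi(x,u,\cdot)$ is defined on $[0,\tau]$ and is continuous in its first argument. $\mathcal{U}_r\subseteq\mathcal U$ is the set of controls $u$ for which there exists some $x\in Q$ with $\xi(x,u,\cdot)$ $(\tau,Q)$-recurrent. $R(Q,u,\tau)=\bigcup_{t\in[0,\tau],x\in Q}\xi(x,u,t)$, $R_r(Q,\tau)=\bigcup_{u\in\mathcal U_r}R(Q,u,\tau)$, and $$L_\tau=\max_{x_1,x_2\in \mathrm{cl}(\mathrm{co}(R_r(Q,\tau))),\,u\in U}\frac{\|f(x_1,u)-f(x_2,u)\|}{\|x_1-x_2\|}.$$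
   Formalization: The control set $\mathcal{U}$ is closed under time shifts: for every u in $\mathcal{U}$ and every s >= 0, the control t |-> u(t+s) also lies in $\mathcal{U}$. The statement above fails without it. *)

theory Defs
  imports "HOL-Analysis.Analysis"
begin

text \<open>State space: a finite-dimensional real normed space with an arbitrary norm
  (class heine_borel for normed spaces characterises finite dimension), i.e. R^n with a fixed norm.\<close>

definition loc_lipschitz_xu :: "('a::real_normed_vector \<Rightarrow> 'b::real_normed_vector \<Rightarrow> 'a) \<Rightarrow> bool" where
  "loc_lipschitz_xu f \<longleftrightarrow>
     (\<forall>x0 u0. \<exists>r>0. \<exists>K. \<forall>x1 x2 u1 u2.
        x1 \<in> cball x0 r \<longrightarrow> x2 \<in> cball x0 r \<longrightarrow> u1 \<in> cball u0 r \<longrightarrow> u2 \<in> cball u0 r \<longrightarrow>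
        norm (f x1 u1 - f x2 u2) \<le> K * (norm (x1 - x2) + norm (u1 - u2)))"

definition piecewise_cont :: "(real \<Rightarrow> 'b::real_normed_vector) \<Rightarrow> bool" where
  "piecewise_cont u \<longleftrightarrow>
     (\<forall>T\<ge>0. \<exists>S. finite S \<and>
        (\<forall>t\<in>{0..T} - S. continuous (at t within {0..}) u) \<and>
        (\<forall>s\<in>S. (\<exists>l. (u \<longlongrightarrow> l) (at_right s)) \<and> (0 < s \<longrightarrow> (\<exists>l. (u \<longlongrightarrow> l) (at_left s)))))"

text \<open>phi is a (Caratheodory) solution of x' = f(x,u) on [0,T] with phi(0)=x.\<close>
definition solves_on :: "('a::real_normed_vector \<Rightarrow> 'b \<Rightarrow> 'a) \<Rightarrow> (real \<Rightarrow> 'b) \<Rightarrow> 'a \<Rightarrow> (real \<Rightarrow> 'a) \<Rightarrow> real \<Rightarrow> bool" where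
  "solves_on f u x \<phi> T \<longleftrightarrow> 0 \<le> T \<and> continuous_on {0..T} \<phi> \<and>
     (\<forall>t\<in>{0..T}. ((\<lambda>s. f (\<phi> s) (u s)) has_integral (\<phi> t - x)) {0..t})"

definition traj_defined :: "('a::real_normed_vector \<Rightarrow> 'b \<Rightarrow> 'a) \<Rightarrow> 'a \<Rightarrow> (real \<Rightarrow> 'b) \<Rightarrow> real \<Rightarrow> bool" where
  "traj_defined f x u t \<longleftrightarrow> (\<exists>\<phi>. solves_on f u x \<phi> t)"

definition xi :: "('a::real_normed_vector \<Rightarrow> 'b \<Rightarrow> 'a) \<Rightarrow> 'a \<Rightarrow> (real \<Rightarrow> 'b) \<Rightarrow> real \<Rightarrow> 'a" where
  "xi f x u t = (THE y. \<exists>\<phi>. solves_on f u x \<phi> t \<and> \<phi> t = y)"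

definition controlled_recurrent :: "('a::real_normed_vector \<Rightarrow> 'b \<Rightarrow> 'a) \<Rightarrow> (real \<Rightarrow> 'b) set \<Rightarrow> real \<Rightarrow> 'a set \<Rightarrow> bool" where
  "controlled_recurrent f UU \<tau> Q \<longleftrightarrow>
     (\<forall>x\<in>Q. \<exists>u\<in>UU. \<forall>t\<ge>0. \<exists>t'\<in>{t..t+\<tau>}. traj_defined f x u t' \<and> xi f x u t' \<in> Q)"

text \<open>(\<tau>,Q)-recurrent trajectory (\<epsilon> = 0, T = \<infinity>).\<close>
definition traj_recurrent :: "('a::real_normed_vector \<Rightarrow> 'b \<Rightarrow> 'a) \<Rightarrow> real \<Rightarrow> 'a set \<Rightarrow> 'a \<Rightarrow> (real \<Rightarrow> 'b) \<Rightarrow> bool" where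
  "traj_recurrent f \<tau> Q x u \<longleftrightarrow>
     (\<forall>t\<ge>0. \<exists>t'\<in>{t..t+\<tau>}. traj_defined f x u t' \<and> xi f x u t' \<in> Q)"

definition tau_complete :: "('a::real_normed_vector \<Rightarrow> 'b \<Rightarrow> 'a) \<Rightarrow> (real \<Rightarrow> 'b) set \<Rightarrow> real \<Rightarrow> 'a set \<Rightarrow> bool" where
  "tau_complete f UU \<tau> Q \<longleftrightarrow>
     (\<forall>x\<in>Q. \<forall>u\<in>UU. traj_defined f x u \<tau>) \<and>
     (\<forall>u\<in>UU. \<forall>t\<in>{0..\<tau>}. continuous_on Q (\<lambda>x. xi f x u t))"

definition U_r :: "('a::real_normed_vector \<Rightarrow> 'b \<Rightarrow> 'a) \<Rightarrow> (real \<Rightarrow> 'b) set \<Rightarrow> real \<Rightarrow> 'a set \<Rightarrow> (real \<Rightarrow> 'b) set" where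
  "U_r f UU \<tau> Q = {u \<in> UU. \<exists>x\<in>Q. traj_recurrent f \<tau> Q x u}"

definition reach :: "('a::real_normed_vector \<Rightarrow> 'b \<Rightarrow> 'a) \<Rightarrow> 'a set \<Rightarrow> (real \<Rightarrow> 'b) \<Rightarrow> real \<Rightarrow> 'a set" where
  "reach f Q u \<tau> = {xi f x u t | x t. x \<in> Q \<and> t \<in> {0..\<tau>}}"

definition reach_r :: "('a::real_normed_vector \<Rightarrow> 'b \<Rightarrow> 'a) \<Rightarrow> (real \<Rightarrow> 'b) set \<Rightarrow> 'a set \<Rightarrow> real \<Rightarrow> 'a set" where
  "reach_r f UU Q \<tau> = (\<Union>u\<in>U_r f UU \<tau> Q. reach f Q u \<tau>)"

definition lip_quotients :: "('a::real_normed_vector \<Rightarrow> 'b \<Rightarrow> 'a) \<Rightarrow> 'b set \<Rightarrow> (real \<Rightarrow> 'b) set \<Rightarrow> 'a set \<Rightarrow> real \<Rightarrow> real set" where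
  "lip_quotients f U UU Q \<tau> =
     {norm (f x1 v - f x2 v) / norm (x1 - x2) | x1 x2 v.
        x1 \<in> closure (convex hull (reach_r f UU Q \<tau>)) \<and> x2 \<in> closure (convex hull (reach_r f UU Q \<tau>)) \<and>
        x1 \<noteq> x2 \<and> v \<in> U}"

text \<open>L_tau; value 0 when there are no pairs x1 \<noteq> x2 (all quotients are \<ge> 0).\<close>
definition L_tau :: "('a::real_normed_vector \<Rightarrow> 'b \<Rightarrow> 'a) \<Rightarrow> 'b set \<Rightarrow> (real \<Rightarrow> 'b) set \<Rightarrow> 'a set \<Rightarrow> real \<Rightarrow> real" where
  "L_tau f U UU Q \<tau> = Sup (insert 0 (lip_quotients f U UU Q \<tau>))"

definition F_Q :: "('a::real_normed_vector \<Rightarrow> 'b \<Rightarrow> 'a) \<Rightarrow> 'b set \<Rightarrow> 'a set \<Rightarrow> real" where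
  "F_Q f U Q = Sup {norm (f x v) | x v. x \<in> Q \<and> v \<in> U}"

end

theory Submission
  imports Defs
begin

lemma sol_init:
  fixes f :: "'a::banach \<Rightarrow> 'b \<Rightarrow> 'a"
  assumes "solves_on f w x \<phi> T" shows "\<phi> 0 = x"
proof -
  have A: "\<forall>t\<in>{0..T}. ((\<lambda>s. f (\<phi> s) (w s)) has_integral (\<phi> t - x)) {0..t}" and "0 \<le> T"
    using assms unfolding solves_on_def by simp_all
  hence "((\<lambda>s. f (\<phi> s) (w s)) has_integral (\<phi> 0 - x)) {0..0}"
    using A[rule_format, of 0] by simp
  moreover have "((\<lambda>s. f (\<phi> s) (w s)) has_integral 0) {0..(0::real)}"
    using has_integral_refl(2)[of _ 0] by simp
  ultimately show ?thesis using has_integral_unique by (metis eq_iff_diff_eq_0)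
qed

lemma sol_int:
  fixes f :: "'a::banach \<Rightarrow> 'b \<Rightarrow> 'a"
  assumes "solves_on f w x \<phi> T" "0 \<le> a" "a \<le> b" "b \<le> T"
  shows "((\<lambda>r. f (\<phi> r) (w r)) has_integral (\<phi> b - \<phi> a)) {a..b}"
proof -
  let ?G = "\<lambda>r. f (\<phi> r) (w r)"
  have hb: "(?G has_integral (\<phi> b - x)) {0..b}" and ha: "(?G has_integral (\<phi> a - x)) {0..a}"
    using assms unfolding solves_on_def by simp_all
  have ib: "?G integrable_on {0..b}" using hb by (rule has_integral_integrable)
  have iab: "?G integrable_on {a..b}" using integrable_subinterval_real[OF ib] assms by auto
  have "integral {0..a} ?G + integral {a..b} ?G = integral {0..b} ?G"
    using Henstock_Kurzweil_Integration.integral_combine[OF assms(2,3) ib] by simp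
  hence "integral {a..b} ?G = \<phi> b - \<phi> a" using integral_unique[OF hb] integral_unique[OF ha]
    by (simp add: algebra_simps)
  thus ?thesis using iab has_integral_integrable_integral by blast
qed

lemma sol_restrict:
  assumes "solves_on f w x \<phi> T" "0 \<le> t" "t \<le> T"
  shows "solves_on f w x \<phi> t"
  using assms unfolding solves_on_def by (auto intro: continuous_on_subset)

lemma sol_shift:
  fixes f :: "'a::banach \<Rightarrow> 'b \<Rightarrow> 'a"
  assumes "solves_on f w x \<phi> T" "0 \<le> s" "s \<le> T"
  shows "solves_on f (\<lambda>r. w (r + s)) (\<phi> s) (\<lambda>r. \<phi> (r + s)) (T - s)"
  unfolding solves_on_def
proof (intro conjI ballI)
  show "0 \<le> T - s" using assms by simp
  have c: "continuous_on {0..T} \<phi>" using assms unfolding solves_on_def by simp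
  have "continuous_on {0..T - s} (\<lambda>r. r + s)" by (intro continuous_intros)
  moreover have "(\<lambda>r. r + s) ` {0..T - s} \<subseteq> {0..T}" using assms by auto
  ultimately show "continuous_on {0..T - s} (\<lambda>r. \<phi> (r + s))"
    using continuous_on_compose2[OF c] by blast
  fix t assume t: "t \<in> {0..T-s}"
  have h: "((\<lambda>r. f (\<phi> r) (w r)) has_integral (\<phi> (t+s) - \<phi> s)) (cbox s (t+s))"
    using sol_int[OF assms(1), of s "t+s"] t assms by simp
  have "((\<lambda>r. f (\<phi> (1 *\<^sub>R r + s)) (w (1 *\<^sub>R r + s))) has_integral ((\<phi> (t+s) - \<phi> s) /\<^sub>R 1 ^ DIM(real)))
           (cbox ((s - s) /\<^sub>R 1) ((t + s - s) /\<^sub>R 1))"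
    using has_integral_affinity'[OF h, of 1 s] by simp
  thus "((\<lambda>r. f (\<phi> (r + s)) (w (r + s))) has_integral (\<phi> (t + s) - \<phi> s)) {0..t}"
    by simp
qed

lemma loc_unif_lip:
  fixes f :: "'a::real_normed_vector \<Rightarrow> 'b::real_normed_vector \<Rightarrow> 'a"
  assumes "loc_lipschitz_xu f" "compact U"
  shows "\<exists>r>0. \<exists>K\<ge>0. \<forall>x1 x2 v. x1 \<in> cball p r \<longrightarrow> x2 \<in> cball p r \<longrightarrow> v \<in> U \<longrightarrow>
           norm (f x1 v - f x2 v) \<le> K * norm (x1 - x2)"
proof -
  from assms(1) have "\<forall>v. \<exists>r>0. \<exists>K. \<forall>x1 x2 u1 u2.
        x1 \<in> cball p r \<longrightarrow> x2 \<in> cball p r \<longrightarrow> u1 \<in> cball v r \<longrightarrow> u2 \<in> cball v r \<longrightarrow>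
        norm (f x1 u1 - f x2 u2) \<le> K * (norm (x1 - x2) + norm (u1 - u2))"
    unfolding loc_lipschitz_xu_def by blast
  then obtain R where R: "\<forall>v. R v > 0 \<and> (\<exists>K. \<forall>x1 x2 u1 u2.
        x1 \<in> cball p (R v) \<longrightarrow> x2 \<in> cball p (R v) \<longrightarrow> u1 \<in> cball v (R v) \<longrightarrow> u2 \<in> cball v (R v) \<longrightarrow>
        norm (f x1 u1 - f x2 u2) \<le> K * (norm (x1 - x2) + norm (u1 - u2)))"
    by (rule choice[THEN exE]) blast
  hence "\<forall>v. \<exists>K. \<forall>x1 x2 u1 u2.
        x1 \<in> cball p (R v) \<longrightarrow> x2 \<in> cball p (R v) \<longrightarrow> u1 \<in> cball v (R v) \<longrightarrow> u2 \<in> cball v (R v) \<longrightarrow>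
        norm (f x1 u1 - f x2 u2) \<le> K * (norm (x1 - x2) + norm (u1 - u2))" by blast
  then obtain KK where KK: "\<forall>v. \<forall>x1 x2 u1 u2.
        x1 \<in> cball p (R v) \<longrightarrow> x2 \<in> cball p (R v) \<longrightarrow> u1 \<in> cball v (R v) \<longrightarrow> u2 \<in> cball v (R v) \<longrightarrow>
        norm (f x1 u1 - f x2 u2) \<le> KK v * (norm (x1 - x2) + norm (u1 - u2))"
    by (rule choice[THEN exE]) blast
  have RK: "\<And>v. R v > 0" "\<And>v x1 x2 u1 u2.
        x1 \<in> cball p (R v) \<Longrightarrow> x2 \<in> cball p (R v) \<Longrightarrow> u1 \<in> cball v (R v) \<Longrightarrow> u2 \<in> cball v (R v) \<Longrightarrow>
        norm (f x1 u1 - f x2 u2) \<le> KK v * (norm (x1 - x2) + norm (u1 - u2))"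
    using R KK by blast+
  have cov: "U \<subseteq> (\<Union>c\<in>U. ball c (R c))" using RK(1) by auto
  obtain C where C: "C \<subseteq> U" "finite C" "U \<subseteq> (\<Union>c\<in>C. ball c (R c))"
    using compactE_image[OF assms(2) _ cov] by blast
  define r where "r = (if C = {} then 1 else Min (R ` C))"
  define K where "K = (if C = {} then 0 else Max ((\<lambda>c. \<bar>KK c\<bar>) ` C))"
  have r: "r > 0" using C RK(1) unfolding r_def by auto
  have K: "K \<ge> 0" using C unfolding K_def by (auto simp: Max_ge_iff)
  show ?thesis
  proof (intro exI conjI allI impI)
    fix x1 x2 v assume x1: "x1 \<in> cball p r" and x2: "x2 \<in> cball p r" and v: "v \<in> U"
    then obtain c where c: "c \<in> C" "v \<in> ball c (R c)" using C by blast
    have "r \<le> R c" using c C unfolding r_def by auto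
    hence "x1 \<in> cball p (R c)" "x2 \<in> cball p (R c)" using x1 x2 by auto
    moreover have "v \<in> cball c (R c)" using c by auto
    ultimately have "norm (f x1 v - f x2 v) \<le> KK c * (norm (x1 - x2) + norm (v - v))"
      using RK(2) by blast
    also have "\<dots> \<le> K * norm (x1 - x2)"
    proof -
      have "KK c \<le> K" using c C unfolding K_def by (auto intro!: Max_ge_iff[THEN iffD2] bexI[of _ c])
      thus ?thesis by (simp add: mult_right_mono)
    qed
    finally show "norm (f x1 v - f x2 v) \<le> K * norm (x1 - x2)" .
  qed (use r K in auto)
qed

lemma sol_unique:
  fixes f :: "'a::banach \<Rightarrow> 'b::real_normed_vector \<Rightarrow> 'a"
  assumes lipf: "loc_lipschitz_xu f" and cU: "compact U" and wU: "\<forall>t\<ge>0. w t \<in> U"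
    and s1: "solves_on f w x \<phi>1 T" and s2: "solves_on f w x \<phi>2 T" and t: "t \<in> {0..T}"
  shows "\<phi>1 t = \<phi>2 t"
proof (rule ccontr)
  assume ne: "\<phi>1 t \<noteq> \<phi>2 t"
  define D where "D = {t\<in>{0..T}. \<phi>1 t \<noteq> \<phi>2 t}"
  define t0 where "t0 = Inf D"
  have Dne: "D \<noteq> {}" using ne t by (auto simp: D_def)
  have bdd: "bdd_below D" unfolding bdd_below_def D_def by auto
  have t0ge: "0 \<le> t0" unfolding t0_def using Dne by (auto simp: D_def intro!: cInf_greatest)
  have t0le: "t0 \<le> T"
  proof -
    obtain d where "d \<in> D" using Dne by blast
    hence "t0 \<le> d" "d \<le> T" using cInf_lower[OF _ bdd] by (auto simp: t0_def D_def)
    thus ?thesis by simp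
  qed
  have c1: "continuous_on {0..T} \<phi>1" and c2: "continuous_on {0..T} \<phi>2"
    using s1 s2 unfolding solves_on_def by simp_all
  have below: "\<And>r. r \<in> {0..T} \<Longrightarrow> r < t0 \<Longrightarrow> \<phi>1 r = \<phi>2 r"
  proof (rule ccontr)
    fix r assume "r \<in> {0..T}" "r < t0" "\<phi>1 r \<noteq> \<phi>2 r"
    hence "r \<in> D" by (simp add: D_def)
    hence "t0 \<le> r" using cInf_lower[OF _ bdd] by (simp add: t0_def)
    thus False using \<open>r < t0\<close> by simp
  qed
  have at0: "\<phi>1 t0 = \<phi>2 t0"
  proof cases
    assume "t0 = 0" thus ?thesis using sol_init[OF s1] sol_init[OF s2] by simp
  next
    assume "t0 \<noteq> 0" hence pos: "0 < t0" using t0ge by simp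
    let ?A = "{r\<in>{0..T}. (\<lambda>r. \<phi>1 r - \<phi>2 r) r = 0}"
    have cl: "closed ?A"
      by (rule continuous_closed_preimage_constant) (auto intro!: continuous_intros c1 c2)
    have "{0..<t0} \<subseteq> ?A" using below t0le by auto
    hence "closure {0..<t0} \<subseteq> ?A" using closure_minimal cl by blast
    hence "{0..t0} \<subseteq> ?A" using pos by simp
    hence "t0 \<in> ?A" using pos by (meson atLeastAtMost_iff less_imp_le order_refl subsetD)
    thus ?thesis by simp
  qed
  define p where "p = \<phi>1 t0"
  obtain r K where r: "r > 0" "K \<ge> 0" and lip: "\<And>x1 x2 v. x1 \<in> cball p r \<Longrightarrow> x2 \<in> cball p r \<Longrightarrow> v \<in> U \<Longrightarrow>
           norm (f x1 v - f x2 v) \<le> K * norm (x1 - x2)"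
    using loc_unif_lip[OF lipf cU, of p] by blast
  have t0T: "t0 \<in> {0..T}" using t0ge t0le by simp
  obtain d1 where d1: "d1 > 0" "\<And>x'. x' \<in> {0..T} \<Longrightarrow> dist x' t0 < d1 \<Longrightarrow> dist (\<phi>1 x') (\<phi>1 t0) < r"
    using c1 t0T r(1) unfolding continuous_on_iff by metis
  obtain d2 where d2: "d2 > 0" "\<And>x'. x' \<in> {0..T} \<Longrightarrow> dist x' t0 < d2 \<Longrightarrow> dist (\<phi>2 x') (\<phi>2 t0) < r"
    using c2 t0T r(1) unfolding continuous_on_iff by metis
  define h where "h = min (min d1 d2) (1 / (2*(K+1)))"
  have hpos: "h > 0" using d1 d2 r unfolding h_def by auto
  obtain t' where t': "t' \<in> D" "t' < t0 + h"
    using cInf_less_iff[OF Dne bdd, of "t0 + h"] hpos by (auto simp: t0_def)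
  have t'T: "t' \<in> {0..T}" and t'ne: "\<phi>1 t' \<noteq> \<phi>2 t'" using t' by (auto simp: D_def)
  have "t0 \<le> t'" using cInf_lower[OF t'(1) bdd] by (simp add: t0_def)
  let ?g = "\<lambda>\<rho>. norm (\<phi>1 \<rho> - \<phi>2 \<rho>)"
  have sub: "{t0..t'} \<subseteq> {0..T}" using t0ge t'T by auto
  have cg: "continuous_on {t0..t'} ?g"
    by (intro continuous_intros continuous_on_subset[OF c1 sub] continuous_on_subset[OF c2 sub])
  obtain m where m: "m \<in> {t0..t'}" "\<And>y. y \<in> {t0..t'} \<Longrightarrow> ?g y \<le> ?g m"
    using continuous_attains_sup[OF compact_Icc _ cg] \<open>t0 \<le> t'\<close> by auto
  have inball: "\<phi>1 y \<in> cball p r \<and> \<phi>2 y \<in> cball p r" if y: "y \<in> {t0..t'}" for y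
  proof -
    have "y \<in> {0..T}" using y sub by auto
    moreover have "dist y t0 < d1" "dist y t0 < d2" using y t' unfolding h_def dist_real_def by auto
    ultimately have "dist (\<phi>1 y) p < r" "dist (\<phi>2 y) p < r"
      using d1(2) d2(2) at0 unfolding p_def by auto
    thus ?thesis by (simp add: dist_commute less_imp_le)
  qed
  have i1: "((\<lambda>r. f (\<phi>1 r) (w r)) has_integral (\<phi>1 m - \<phi>1 t0)) {t0..m}"
    using sol_int[OF s1 t0ge] m sub by auto
  have i2: "((\<lambda>r. f (\<phi>2 r) (w r)) has_integral (\<phi>2 m - \<phi>2 t0)) {t0..m}"
    using sol_int[OF s2 t0ge] m sub by auto
  have idiff: "((\<lambda>r. f (\<phi>1 r) (w r) - f (\<phi>2 r) (w r)) has_integral (\<phi>1 m - \<phi>2 m)) (cbox t0 m)"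
    using has_integral_diff[OF i1 i2] at0 by simp
  have gm0: "0 \<le> ?g m" by simp
  have bnd: "norm (f (\<phi>1 y) (w y) - f (\<phi>2 y) (w y)) \<le> K * ?g m" if y: "y \<in> cbox t0 m" for y
  proof -
    have yy: "y \<in> {t0..t'}" using y m by auto
    have "w y \<in> U" using wU yy t0ge by auto
    hence "norm (f (\<phi>1 y) (w y) - f (\<phi>2 y) (w y)) \<le> K * ?g y" using lip inball[OF yy] by blast
    also have "\<dots> \<le> K * ?g m" using m(2)[OF yy] r(2) by (simp add: mult_left_mono)
    finally show ?thesis .
  qed
  have "?g m \<le> K * ?g m * (m - t0)"
    using has_integral_bound[OF _ idiff bnd] r(2) m by simp
  also have "\<dots> = ?g m * (K * (m - t0))" by simp
  also have "\<dots> \<le> ?g m * (1/2)"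
  proof (rule mult_left_mono[OF _ gm0])
    have "m - t0 \<le> 1 / (2*(K+1))" using m t' unfolding h_def by auto
    hence "K * (m - t0) \<le> K * (1 / (2*(K+1)))" using r(2) by (rule mult_left_mono)
    also have "\<dots> \<le> 1/2" using r(2) by (simp add: field_simps)
    finally show "K * (m - t0) \<le> 1/2" .
  qed
  finally have "?g m = 0" using gm0 by simp
  hence "?g t' = 0" using m(2)[of t'] \<open>t0 \<le> t'\<close> by (metis atLeastAtMost_iff norm_ge_zero order_refl antisym)
  thus False using t'ne by simp
qed

lemma xi_eq:
  fixes f :: "'a::banach \<Rightarrow> 'b::real_normed_vector \<Rightarrow> 'a"
  assumes lipf: "loc_lipschitz_xu f" and cU: "compact U" and wU: "\<forall>t\<ge>0. w t \<in> U"
    and s: "solves_on f w x \<phi> T" and t: "t \<in> {0..T}"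
  shows "xi f x w t = \<phi> t"
  unfolding xi_def
proof (rule the_equality)
  have st: "solves_on f w x \<phi> t" using sol_restrict[OF s] t by auto
  thus "\<exists>\<phi>'. solves_on f w x \<phi>' t \<and> \<phi>' t = \<phi> t" by blast
  fix y assume "\<exists>\<phi>'. solves_on f w x \<phi>' t \<and> \<phi>' t = y"
  then obtain \<phi>' where "solves_on f w x \<phi>' t" "\<phi>' t = y" by blast
  thus "y = \<phi> t" using sol_unique[OF lipf cU wU _ st, of \<phi>' t] t by auto
qed

lemma gronwall_simple:
  fixes g :: "real \<Rightarrow> real"
  assumes ab: "a \<le> b" and cg: "continuous_on {a..b} g" and L: "L \<ge> 0"
    and hyp: "\<And>\<rho>. \<rho> \<in> {a..b} \<Longrightarrow> g \<rho> \<le> c + L * integral {a..\<rho>} g"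
  shows "g b \<le> c * exp (L * (b - a))"
proof (cases "a = b")
  case True
  thus ?thesis using hyp[of b] by simp
next
  case False
  hence ab': "a < b" using ab by simp
  define I where "I = (\<lambda>\<rho>. integral {a..\<rho>} g)"
  define Kf where "Kf = (\<lambda>\<rho>. exp (- L * (\<rho> - a)) * (c + L * I \<rho>))"
  define D where "D = (\<lambda>\<rho>. exp (- L * (\<rho> - a)) * (- L) * (c + L * I \<rho>) + exp (- L * (\<rho> - a)) * (L * g \<rho>))"
  have dK: "(Kf has_derivative (\<lambda>h. h * D x)) (at x within {a..b})" if x: "a \<le> x" "x \<le> b" for x
  proof -
    have dI: "(I has_real_derivative g x) (at x within {a..b})"
      unfolding I_def has_real_derivative_iff_has_vector_derivative
      using integral_has_vector_derivative[OF cg] x by simp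
    have "(Kf has_real_derivative D x) (at x within {a..b})"
      unfolding Kf_def D_def
      by (rule derivative_eq_intros refl dI | simp)+
    hence "(Kf has_derivative (*) (D x)) (at x within {a..b})" unfolding has_field_derivative_def .
    moreover have "(*) (D x) = (\<lambda>h. h * D x)" by (rule ext) (simp add: mult.commute)
    ultimately show ?thesis by simp
  qed
  obtain x where x: "x \<in> {a<..<b}" "Kf b - Kf a = (b - a) * D x"
    using mvt_simple[OF ab' dK] by auto
  have "D x = L * exp (- L * (x - a)) * (g x - (c + L * I x))"
    unfolding D_def by (simp add: algebra_simps)
  also have "\<dots> \<le> 0"
    using hyp[of x] x L unfolding I_def by (intro mult_nonneg_nonpos) auto
  finally have "(b - a) * D x \<le> 0" using ab by (simp add: mult_nonneg_nonpos)
  hence "Kf b \<le> Kf a" using x(2) by simp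
  also have "Kf a = c" unfolding Kf_def I_def by simp
  finally have "exp (- L * (b - a)) * (c + L * I b) \<le> c" unfolding Kf_def .
  moreover have "exp (- L * (b - a)) = inverse (exp (L * (b - a)))"
    by (simp add: exp_minus[symmetric])
  ultimately have "(c + L * I b) / exp (L * (b - a)) \<le> c" by (simp add: divide_inverse mult.commute)
  hence "c + L * I b \<le> c * exp (L * (b - a))" by (simp add: pos_divide_le_eq)
  thus ?thesis using hyp[of b] ab unfolding I_def by simp
qed

lemma f_cont:
  fixes f :: "'a::real_normed_vector \<Rightarrow> 'b::real_normed_vector \<Rightarrow> 'a"
  assumes "loc_lipschitz_xu f"
  shows "continuous_on S (\<lambda>z. f (fst z) (snd z))"
  unfolding continuous_on_iff
proof (intro ballI allI impI)
  fix z :: "'a \<times> 'b" and e :: real assume e: "e > 0"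
  obtain r K where r: "r > 0" and lip: "\<forall>x1 x2 u1 u2.
        x1 \<in> cball (fst z) r \<longrightarrow> x2 \<in> cball (fst z) r \<longrightarrow> u1 \<in> cball (snd z) r \<longrightarrow> u2 \<in> cball (snd z) r \<longrightarrow>
        norm (f x1 u1 - f x2 u2) \<le> K * (norm (x1 - x2) + norm (u1 - u2))"
    using assms unfolding loc_lipschitz_xu_def by blast
  define d where "d = min r (e / (2 * (\<bar>K\<bar> + 1)))"
  have d: "d > 0" using r e unfolding d_def by auto
  show "\<exists>d>0. \<forall>z'\<in>S. dist z' z < d \<longrightarrow> dist (f (fst z') (snd z')) (f (fst z) (snd z)) < e"
  proof (intro exI conjI ballI impI)
    show "d > 0" by (rule d)
    fix z' assume "z' \<in> S" "dist z' z < d"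
    hence d1: "dist (fst z') (fst z) < d" and d2: "dist (snd z') (snd z) < d"
      using dist_fst_le[of z' z] dist_snd_le[of z' z] by linarith+
    have "fst z' \<in> cball (fst z) r" "snd z' \<in> cball (snd z) r"
      using d1 d2 unfolding d_def by (auto simp: dist_commute)
    hence "norm (f (fst z') (snd z') - f (fst z) (snd z)) \<le> K * (norm (fst z' - fst z) + norm (snd z' - snd z))"
      using lip r by auto
    also have "\<dots> \<le> \<bar>K\<bar> * (norm (fst z' - fst z) + norm (snd z' - snd z))"
      by (intro mult_right_mono) auto
    also have "\<dots> \<le> \<bar>K\<bar> * (2 * d)"
      using d1 d2 by (intro mult_left_mono) (auto simp: dist_norm)
    also have "\<dots> \<le> \<bar>K\<bar> * (e / (\<bar>K\<bar> + 1))"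
    proof (intro mult_left_mono)
      have "d \<le> e / (2 * (\<bar>K\<bar> + 1))" unfolding d_def by simp
      also have "\<dots> = (e / (\<bar>K\<bar> + 1)) / 2" by simp
      finally show "2 * d \<le> e / (\<bar>K\<bar> + 1)" by (simp add: field_simps)
    qed simp
    also have "\<dots> < e"
    proof -
      have "\<bar>K\<bar> * (e / (\<bar>K\<bar> + 1)) = e * (\<bar>K\<bar> / (\<bar>K\<bar> + 1))" by simp
      also have "\<dots> < e * 1" using e by (intro mult_strict_left_mono) auto
      finally show ?thesis by simp
    qed
    finally show "dist (f (fst z') (snd z')) (f (fst z) (snd z)) < e" by (simp add: dist_norm)
  qed
qed

lemma f_bdd:
  fixes f :: "'a::real_normed_vector \<Rightarrow> 'b::real_normed_vector \<Rightarrow> 'a"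
  assumes "loc_lipschitz_xu f" "compact Q" "compact U"
  shows "bdd_above {norm (f y v) | y v. y \<in> Q \<and> v \<in> U}"
proof -
  have "compact ((\<lambda>z. f (fst z) (snd z)) ` (Q \<times> U))"
    by (intro compact_continuous_image f_cont assms compact_Times)
  then obtain B where B: "\<forall>a\<in>(\<lambda>z. f (fst z) (snd z)) ` (Q \<times> U). norm a \<le> B"
    using compact_imp_bounded bounded_iff by metis
  show ?thesis unfolding bdd_above_def
  proof (intro exI allI ballI)
    fix n assume "n \<in> {norm (f y v) | y v. y \<in> Q \<and> v \<in> U}"
    then obtain y v where "n = norm (f y v)" "y \<in> Q" "v \<in> U" by blast
    thus "n \<le> B" using B by force
  qed
qed

theorem lemma1:
  fixes f :: "'a::{banach,heine_borel} \<Rightarrow> 'b::euclidean_space \<Rightarrow> 'a"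
    and U :: "'b set" and UU :: "(real \<Rightarrow> 'b) set"
    and Q :: "'a set" and \<tau> :: real and x :: 'a and u :: "real \<Rightarrow> 'b"
  assumes f_lip: "loc_lipschitz_xu f"
    and U_compact: "compact U"
    and UU_pc: "\<forall>w\<in>UU. piecewise_cont w \<and> (\<forall>t\<ge>0. w t \<in> U)"
    and UU_shift: "\<forall>w\<in>UU. \<forall>s\<ge>0. (\<lambda>t. w (t + s)) \<in> UU"
    and Q_compact: "compact Q"
    and tau_nonneg: "0 \<le> \<tau>"
    and Q_rec: "controlled_recurrent f UU \<tau> Q"
    and complete: "tau_complete f UU \<tau> Q"
    and L_finite: "bdd_above (lip_quotients f U UU Q \<tau>)"
    and x_in: "x \<in> Q"
    and u_in: "u \<in> U_r f UU \<tau> Q"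
    and traj_rec: "traj_recurrent f \<tau> Q x u"
  shows "bdd_above {norm (f y v) | y v. y \<in> Q \<and> v \<in> U} \<and>
         (\<forall>t\<ge>0. infdist (xi f x u t) Q \<le> F_Q f U Q * \<tau> * exp (L_tau f U UU Q \<tau> * \<tau>))"
proof -
  have bdd: "bdd_above {norm (f y v) | y v. y \<in> Q \<and> v \<in> U}"
    by (rule f_bdd[OF f_lip Q_compact U_compact])
  define F where "F = F_Q f U Q"
  define L where "L = L_tau f U UU Q \<tau>"
  define C where "C = closure (convex hull (reach_r f UU Q \<tau>))"
  have Fb: "norm (f y v) \<le> F" if "y \<in> Q" "v \<in> U" for y v
    unfolding F_def F_Q_def using that by (intro cSup_upper[OF _ bdd]) blast
  have uUU: "u \<in> UU" using u_in unfolding U_r_def by simp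
  have uU: "\<forall>t\<ge>0. u t \<in> U" using UU_pc uUU by blast
  have F0: "0 \<le> F" using Fb[OF x_in, of "u 0"] uU by (meson norm_ge_zero order_trans order_refl)
  have L0: "0 \<le> L" unfolding L_def L_tau_def using L_finite by (intro cSup_upper) auto
  have Lq: "norm (f y v - f z v) \<le> L * norm (y - z)" if "y \<in> C" "z \<in> C" "v \<in> U" for y z v
  proof cases
    assume "y = z" thus ?thesis by simp
  next
    assume ne: "y \<noteq> z"
    have "norm (f y v - f z v) / norm (y - z) \<in> lip_quotients f U UU Q \<tau>"
      unfolding lip_quotients_def using that ne unfolding C_def by blast
    hence "norm (f y v - f z v) / norm (y - z) \<le> L"
      unfolding L_def L_tau_def using L_finite by (intro cSup_upper) auto
    thus ?thesis using ne by (simp add: pos_divide_le_eq)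
  qed
  have RC: "reach_r f UU Q \<tau> \<subseteq> C" unfolding C_def
    using hull_subset closure_subset by (metis subset_trans)
  show ?thesis
  proof (intro conjI allI impI bdd)
    fix t :: real assume t0: "0 \<le> t"
    obtain T0 where T0: "T0 \<in> {t..t+\<tau>}" "traj_defined f x u T0"
      using traj_rec t0 unfolding traj_recurrent_def by blast
    obtain \<phi> where phi: "solves_on f u x \<phi> T0" using T0 unfolding traj_defined_def by blast
    have tT0: "t \<le> T0" using T0 by simp
    have xiphi: "\<And>r. r \<in> {0..T0} \<Longrightarrow> xi f x u r = \<phi> r"
      using xi_eq[OF f_lip U_compact uU phi] by blast
    obtain s where s: "0 \<le> s" "s \<le> t" "t - s \<le> \<tau>" "\<phi> s \<in> Q"
    proof cases
      assume "t \<le> \<tau>" thus ?thesis using that[of 0] sol_init[OF phi] x_in t0 by simp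
    next
      assume "\<not> t \<le> \<tau>"
      then obtain t' where t': "t' \<in> {t-\<tau>..t-\<tau>+\<tau>}" "xi f x u t' \<in> Q"
        using traj_rec unfolding traj_recurrent_def by (metis diff_ge_0_iff_ge linear)
      have "t' \<in> {0..T0}" using t' tT0 tau_nonneg \<open>\<not> t \<le> \<tau>\<close> by auto
      thus ?thesis using that[of t'] t' xiphi by auto
    qed
    define q where "q = \<phi> s"
    define w where "w = (\<lambda>r. u (r + s))"
    have wUU: "w \<in> UU" unfolding w_def using UU_shift uUU s by blast
    have wU: "\<forall>t\<ge>0. w t \<in> U" unfolding w_def using uU s by simp
    have sT0: "s \<le> T0" using s tT0 by simp
    have psi: "solves_on f w q (\<lambda>r. \<phi> (r + s)) (T0 - s)"
      unfolding w_def q_def by (rule sol_shift[OF phi s(1) sT0])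
    have wrec: "traj_recurrent f \<tau> Q q w"
      unfolding traj_recurrent_def
    proof (intro allI impI)
      fix r :: real assume r: "0 \<le> r"
      obtain t' where t': "t' \<in> {r+s..r+s+\<tau>}" "traj_defined f x u t'" "xi f x u t' \<in> Q"
        using traj_rec r s unfolding traj_recurrent_def by (metis add_nonneg_nonneg)
      obtain \<phi>' where phi': "solves_on f u x \<phi>' t'" using t' unfolding traj_defined_def by blast
      have st': "s \<le> t'" using t' r by simp
      have "\<phi>' s = xi f x u s" using xi_eq[OF f_lip U_compact uU phi', of s] st' s by simp
      also have "\<dots> = q" using xiphi[of s] s sT0 unfolding q_def by simp
      finally have qq: "\<phi>' s = q" .
      have psi': "solves_on f w q (\<lambda>r. \<phi>' (r + s)) (t' - s)"
        unfolding w_def qq[symmetric] by (rule sol_shift[OF phi' s(1) st'])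
      have "xi f q w (t' - s) = \<phi>' t'"
        using xi_eq[OF f_lip U_compact wU psi', of "t' - s"] st' by simp
      also have "\<dots> = xi f x u t'" using xi_eq[OF f_lip U_compact uU phi', of t'] st' s by simp
      finally have "xi f q w (t' - s) \<in> Q" using t' by simp
      moreover have "traj_defined f q w (t' - s)" unfolding traj_defined_def using psi' by blast
      moreover have "t' - s \<in> {r..r+\<tau>}" using t' by auto
      ultimately show "\<exists>t'\<in>{r..r + \<tau>}. traj_defined f q w t' \<and> xi f q w t' \<in> Q" by blast
    qed
    have qQ: "q \<in> Q" using s unfolding q_def by simp
    have wUr: "w \<in> U_r f UU \<tau> Q" unfolding U_r_def using wUU qQ wrec by blast
    have inC: "\<phi> \<rho> \<in> C" if rho: "\<rho> \<in> {s..t}" for \<rho>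
    proof -
      have "xi f q w (\<rho> - s) = \<phi> (\<rho> - s + s)"
        using xi_eq[OF f_lip U_compact wU psi, of "\<rho> - s"] rho tT0 by simp
      hence "\<phi> \<rho> = xi f q w (\<rho> - s)" by simp
      moreover have "\<rho> - s \<in> {0..\<tau>}" using rho s by auto
      ultimately have "\<phi> \<rho> \<in> reach f Q w \<tau>" unfolding reach_def using qQ by blast
      hence "\<phi> \<rho> \<in> reach_r f UU Q \<tau>" unfolding reach_r_def using wUr by blast
      thus ?thesis using RC by blast
    qed
    have qC: "q \<in> C" using inC[of s] s unfolding q_def by simp
    define g where "g = (\<lambda>\<rho>. norm (\<phi> \<rho> - q))"
    have subst: "{s..t} \<subseteq> {0..T0}" using s tT0 by auto
    have cphi: "continuous_on {0..T0} \<phi>" using phi unfolding solves_on_def by simp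
    have cg: "continuous_on {s..t} g" unfolding g_def
      by (intro continuous_intros continuous_on_subset[OF cphi subst])
    have hyp: "g \<rho> \<le> F * (t - s) + L * integral {s..\<rho>} g" if rho: "\<rho> \<in> {s..t}" for \<rho>
    proof -
      let ?G = "\<lambda>r. f (\<phi> r) (u r)"
      have iG: "(?G has_integral (\<phi> \<rho> - q)) {s..\<rho>}"
        unfolding q_def using sol_int[OF phi s(1), of \<rho>] rho tT0 by simp
      have sub2: "{s..\<rho>} \<subseteq> {s..t}" using rho by auto
      have cg2: "continuous_on {s..\<rho>} g" using continuous_on_subset[OF cg sub2] .
      have ig: "g integrable_on {s..\<rho>}" by (rule integrable_continuous_interval[OF cg2])
      have hB: "((\<lambda>r. F + L * g r) has_integral (F * (\<rho> - s) + L * integral {s..\<rho>} g)) {s..\<rho>}"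
      proof -
        have h1: "((\<lambda>r. F) has_integral (F * (\<rho> - s))) {s..\<rho>}"
          using has_integral_const_real[of F s \<rho>] rho by (simp add: mult.commute)
        have h2: "((\<lambda>r. L * g r) has_integral (L * integral {s..\<rho>} g)) {s..\<rho>}"
          by (rule has_integral_mult_right[OF integrable_integral[OF ig]])
        show ?thesis using has_integral_add[OF h1 h2] .
      qed
      have bnd: "norm (?G r) \<le> F + L * g r" if r: "r \<in> {s..\<rho>}" for r
      proof -
        have rr: "r \<in> {s..t}" using r sub2 by blast
        have ur: "u r \<in> U" using uU r s by auto
        have "norm (?G r) \<le> norm (f q (u r)) + norm (?G r - f q (u r))"
          by (metis add.commute diff_add_cancel norm_triangle_ineq)
        also have "\<dots> \<le> F + L * norm (\<phi> r - q)"
          using Fb[OF qQ ur] Lq[OF inC[OF rr] qC ur] by linarith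
        finally show ?thesis unfolding g_def .
      qed
      have "g \<rho> = norm (integral {s..\<rho>} ?G)" unfolding g_def using integral_unique[OF iG] by simp
      also have "\<dots> \<le> integral {s..\<rho>} (\<lambda>r. F + L * g r)"
        by (rule integral_norm_bound_integral[OF has_integral_integrable[OF iG] has_integral_integrable[OF hB] bnd])
      also have "\<dots> = F * (\<rho> - s) + L * integral {s..\<rho>} g" using integral_unique[OF hB] .
      also have "\<dots> \<le> F * (t - s) + L * integral {s..\<rho>} g"
        using rho F0 by (simp add: mult_left_mono)
      finally show ?thesis .
    qed
    have "g t \<le> (F * (t - s)) * exp (L * (t - s))"
      by (rule gronwall_simple[OF s(2) cg L0 hyp])
    also have "\<dots> \<le> (F * \<tau>) * exp (L * \<tau>)"
      using s F0 L0 tau_nonneg by (intro mult_mono mult_left_mono) (auto intro: mult_left_mono)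
    finally have gt: "g t \<le> F * \<tau> * exp (L * \<tau>)" .
    have "infdist (xi f x u t) Q \<le> dist (\<phi> t) q"
      using infdist_le[OF qQ, of "\<phi> t"] xiphi[of t] t0 tT0 by simp
    also have "\<dots> = g t" unfolding g_def by (simp add: dist_norm)
    finally show "infdist (xi f x u t) Q \<le> F_Q f U Q * \<tau> * exp (L_tau f U UU Q \<tau> * \<tau>)"
      using gt unfolding F_def L_def by simp
  qed
qed
end
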